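(* Let $\xi:[0,\ell)\to\mathbb{R}^n$ be a self-contracted curve. Then for every $\tau\in[0,\ell)$ and all $t_1,t_2\in(\tau,\ell)$ with $\xi(t_1)\neq\xi(\tau)$ and $\xi(t_2)\neq\xi(\tau)$, $$\angle\big(\xi(t_1)-\xi(\tau),\,\xi(t_2)-\xi(\tau)\big)<\frac{\pi}{2},$$ where $\angle(v,w)\in[0,\pi]$ denotes the Euclidean angle between nonzero vectors $v,w$.
   Context: Let $(X,d)$ be a metric space and $\ell\in(0,\infty]$. A map $\xi:[0,\ell)\to X$ (not necessarily continuous) is called self-contracted if $d(\xi(t_2),\xi(t_3))\le d(\xi(t_1),\xi(t_3))$ for all $0\le t_1\le t_2\le t_3<\ell$. Here $X=\mathbb{R}^n$ with the Euclidean distance. *)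

theory Defs
  imports "HOL-Analysis.Analysis"
begin

definition self_contracted :: "ereal \<Rightarrow> (real \<Rightarrow> 'a::metric_space) \<Rightarrow> bool" where
  "self_contracted l xi \<longleftrightarrow>
     (\<forall>t1 t2 t3. 0 \<le> t1 \<and> t1 \<le> t2 \<and> t2 \<le> t3 \<and> ereal t3 < l \<longrightarrow>
        dist (xi t2) (xi t3) \<le> dist (xi t1) (xi t3))"

definition vec_angle :: "'a::real_inner \<Rightarrow> 'a \<Rightarrow> real" where
  "vec_angle v w = arccos (inner v w / (norm v * norm w))"

end

theory Submission
  imports Defs
begin

lemma key:
  fixes x y1 y2 :: "'a::real_inner"
  assumes "dist y1 y2 \<le> dist x y2" "y1 \<noteq> x"
  shows "inner (y1 - x) (y2 - x) > 0"
proof -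
  define a where "a = y1 - x"
  define b where "b = y2 - x"
  have "norm (b - a) \<le> norm b" using assms(1)
    by (simp add: a_def b_def dist_norm norm_minus_commute)
  hence "norm (b - a)^2 \<le> norm b ^2" by (simp add: power_mono)
  hence "inner b b - 2 * inner a b + inner a a \<le> inner b b"
    by (simp add: power2_norm_eq_inner inner_diff inner_commute)
  moreover have "inner a a > 0" using assms(2) by (simp add: a_def)
  ultimately have "inner a b > 0" by linarith
  thus ?thesis by (simp add: a_def b_def)
qed

lemma angle_lt:
  fixes v w :: "'a::real_inner"
  assumes "inner v w > 0"
  shows "vec_angle v w < pi / 2"
proof -
  have nz: "v \<noteq> 0" "w \<noteq> 0" using assms by auto
  have p: "norm v * norm w > 0" using nz by simp
  have "\<bar>inner v w\<bar> \<le> norm v * norm w" by (rule Cauchy_Schwarz_ineq2)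
  hence le: "inner v w / (norm v * norm w) \<le> 1" using p by simp
  have pos: "inner v w / (norm v * norm w) > 0" using p assms by simp
  have "arccos (inner v w / (norm v * norm w)) < arccos 0"
    by (rule arccos_less_arccos) (use le pos in auto)
  thus ?thesis by (simp add: vec_angle_def)
qed

theorem mainTheorem2:
  fixes l :: ereal and xi :: "real \<Rightarrow> real ^ 'n"
  assumes "0 < l"
    and "self_contracted l xi"
    and "0 \<le> \<tau>" and "ereal \<tau> < l"
    and "\<tau> < t1" and "ereal t1 < l"
    and "\<tau> < t2" and "ereal t2 < l"
    and "xi t1 \<noteq> xi \<tau>" and "xi t2 \<noteq> xi \<tau>"
  shows "vec_angle (xi t1 - xi \<tau>) (xi t2 - xi \<tau>) < pi / 2"
proof (rule angle_lt)
  show "inner (xi t1 - xi \<tau>) (xi t2 - xi \<tau>) > 0"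
  proof (cases "t1 \<le> t2")
    case True
    hence "dist (xi t1) (xi t2) \<le> dist (xi \<tau>) (xi t2)"
      using assms(2,3,5,8) unfolding self_contracted_def by auto
    thus ?thesis using key assms(9) by blast
  next
    case False
    hence "dist (xi t2) (xi t1) \<le> dist (xi \<tau>) (xi t1)"
      using assms(2,3,7,6) unfolding self_contracted_def by auto
    hence "inner (xi t2 - xi \<tau>) (xi t1 - xi \<tau>) > 0" using key assms(10) by blast
    thus ?thesis by (simp add: inner_commute)
  qed
qed

end
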